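(* For any single-qubit non-stabilizer state $\rho$ there exists an $\omega$-witness $|\omega\rangle$ such that $\rho\in B_\omega$, where $B_\omega$ is the convex hull of all pure single-qubit states $\Psi$ with $|\langle\omega|\Psi\rangle|^2=\xi(\Psi)$.
   Context: Single-qubit pure stabilizer states are $|0\rangle,|1\rangle,|\pm\rangle,|\pm_i\rangle$; a non-stabilizer state is one not in their convex hull. An $\omega$-witness is a vector $|\omega\rangle\in\mathbb C^2$ with $|\langle\omega|\phi\rangle|\le1$ for all pure single-qubit stabilizer states $|\phi\rangle$. The stabilizer extent is $\xi(\Psi)=\min\{\|c\|_1^2:|\Psi\rangle=\sum_jc_j|\phi_j\rangle,\ |\phi_j\rangle\text{ stabilizer}\}$. *)

theory Defs
  imports "HOL-Analysis.Analysis"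
begin

definition ket :: "complex \<Rightarrow> complex \<Rightarrow> complex ^ 2" where
  "ket a b = (\<chi> i. if i = 1 then a else b)"

definition braket :: "complex ^ 2 \<Rightarrow> complex ^ 2 \<Rightarrow> complex" where
  "braket w v = (\<Sum>i\<in>UNIV. cnj (w $ i) * v $ i)"

definition stab_states :: "(complex ^ 2) set" where
  "stab_states =
    {ket 1 0, ket 0 1,
     ket (1 / sqrt 2) (1 / sqrt 2), ket (1 / sqrt 2) (- 1 / sqrt 2),
     ket (1 / sqrt 2) (\<i> / sqrt 2), ket (1 / sqrt 2) (- \<i> / sqrt 2)}"

definition proj :: "complex ^ 2 \<Rightarrow> complex ^ 2 ^ 2" where
  "proj v = (\<chi> i j. v $ i * cnj (v $ j))"

definition density_matrix :: "complex ^ 2 ^ 2 \<Rightarrow> bool" where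
  "density_matrix \<rho> \<longleftrightarrow>
     (\<forall>i j. \<rho> $ i $ j = cnj (\<rho> $ j $ i)) \<and>
     (\<forall>v. Re (braket v (\<rho> *v v)) \<ge> 0) \<and>
     \<rho> $ 1 $ 1 + \<rho> $ 2 $ 2 = 1"

definition non_stabilizer :: "complex ^ 2 ^ 2 \<Rightarrow> bool" where
  "non_stabilizer \<rho> \<longleftrightarrow> \<rho> \<notin> convex hull (proj ` stab_states)"

definition omega_witness :: "complex ^ 2 \<Rightarrow> bool" where
  "omega_witness w \<longleftrightarrow> (\<forall>\<phi>\<in>stab_states. cmod (braket w \<phi>) \<le> 1)"

text \<open>Stabilizer extent: minimum of the squared l1-norm over all finite decompositions
  into stabilizer states (the minimum is rendered as an infimum).\<close>
definition stab_extent :: "complex ^ 2 \<Rightarrow> real" where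
  "stab_extent \<Psi> = Inf {(\<Sum>j<n. cmod (c j))\<^sup>2 | (n::nat) (c::nat \<Rightarrow> complex) (\<phi>::nat \<Rightarrow> complex ^ 2).
       (\<forall>j<n. \<phi> j \<in> stab_states) \<and> \<Psi> = (\<Sum>j<n. c j *s \<phi> j)}"

definition B_omega :: "complex ^ 2 \<Rightarrow> (complex ^ 2 ^ 2) set" where
  "B_omega w = convex hull
     {proj \<Psi> | \<Psi>. norm \<Psi> = 1 \<and> (cmod (braket w \<Psi>))\<^sup>2 = stab_extent \<Psi>}"

end

theory Submission
  imports Defs
begin

definition gen :: "complex ^ 2 \<Rightarrow> (complex ^ 2) set" where
  "gen w = {g. braket w g = 1 \<and> (\<exists>c \<phi>. cmod c = 1 \<and> \<phi> \<in> stab_states \<and> g = c *s \<phi>)}"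

definition wcone :: "complex ^ 2 \<Rightarrow> (complex ^ 2) set" where
  "wcone w = {v. \<exists>(n::nat) t g. (\<forall>j<n. 0 \<le> t j \<and> g j \<in> gen w) \<and> v = (\<Sum>j<n. t j *\<^sub>R g j)}"

lemma braket_add: "braket w (a + b) = braket w a + braket w b"
  by (simp add: braket_def sum_2 algebra_simps)

lemma braket_scaleR: "braket w (r *\<^sub>R a) = of_real r * braket w a"
  unfolding braket_def sum_2 vector_scaleR_component by (simp add: scaleR_conv_of_real algebra_simps)

lemma braket_smult: "braket w (c *s a) = c * braket w a"
  by (simp add: braket_def sum_2 algebra_simps)

lemma braket_sum: "braket w (\<Sum>j\<in>A. f j) = (\<Sum>j\<in>A. braket w (f j))"
  unfolding braket_def sum_component sum_distrib_left by (rule sum.swap)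

lemma witness_bound:
  assumes "omega_witness w" "\<forall>j<n. \<phi> j \<in> stab_states"
  shows "cmod (braket w (\<Sum>j<n. c j *s \<phi> j)) \<le> (\<Sum>j<n. cmod (c j))"
proof -
  have "cmod (braket w (\<Sum>j<n. c j *s \<phi> j)) = cmod (\<Sum>j<n. c j * braket w (\<phi> j))"
    by (simp add: braket_sum braket_smult)
  also have "\<dots> \<le> (\<Sum>j<n. cmod (c j * braket w (\<phi> j)))" by (rule norm_sum)
  also have "\<dots> \<le> (\<Sum>j<n. cmod (c j))"
  proof (rule sum_mono)
    fix j assume "j \<in> {..<n}"
    then have "cmod (braket w (\<phi> j)) \<le> 1" using assms unfolding omega_witness_def by auto
    then show "cmod (c j * braket w (\<phi> j)) \<le> cmod (c j)"
      by (simp add: norm_mult mult_left_le)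
  qed
  finally show ?thesis .
qed

lemma extent_lower:
  assumes "omega_witness w"
  shows "(cmod (braket w \<Psi>))\<^sup>2 \<le> stab_extent \<Psi>"
proof -
  let ?S = "{(\<Sum>j<n. cmod (c j))\<^sup>2 | (n::nat) (c::nat \<Rightarrow> complex) (\<phi>::nat \<Rightarrow> complex ^ 2).
       (\<forall>j<n. \<phi> j \<in> stab_states) \<and> \<Psi> = (\<Sum>j<n. c j *s \<phi> j)}"
  have ne: "?S \<noteq> {}"
  proof -
    let ?c = "\<lambda>j::nat. if j = 0 then \<Psi> $ 1 else \<Psi> $ 2"
    let ?p = "\<lambda>j::nat. if j = 0 then ket 1 0 else ket 0 1"
    have s2: "(\<Sum>j<(2::nat). ?c j *s ?p j) = ?c 0 *s ?p 0 + ?c 1 *s ?p 1"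
      by (simp add: eval_nat_numeral)
    have "\<Psi> = (\<Sum>j<2. ?c j *s ?p j)"
      unfolding s2 by (simp add: vec_eq_iff forall_2 ket_def)
    moreover have "ket 1 0 \<in> stab_states" "ket 0 1 \<in> stab_states" unfolding stab_states_def by blast+
    then have "\<forall>j<2. ?p j \<in> stab_states" by simp
    ultimately have "(\<Sum>j<2. cmod (?c j))\<^sup>2 \<in> ?S"
      by (intro CollectI exI[where x=2] exI[where x="?c"] exI[where x="?p"]) simp
    then show ?thesis by blast
  qed
  show ?thesis unfolding stab_extent_def
  proof (rule cInf_greatest[OF ne])
    fix x assume "x \<in> ?S"
    then obtain n :: nat and c \<phi> where x: "x = (\<Sum>j<n. cmod (c j))\<^sup>2" and h: "\<forall>j<n. \<phi> j \<in> stab_states"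
      and e: "\<Psi> = (\<Sum>j<n. c j *s \<phi> j)" by blast
    have "cmod (braket w \<Psi>) \<le> (\<Sum>j<n. cmod (c j))" using witness_bound[OF assms h] e by simp
    then show "(cmod (braket w \<Psi>))\<^sup>2 \<le> x" unfolding x
      by (simp add: power_mono)
  qed
qed

lemma extent_upper:
  fixes n :: nat
  assumes "\<forall>j<n. \<phi> j \<in> stab_states" "\<Psi> = (\<Sum>j<n. c j *s \<phi> j)"
  shows "stab_extent \<Psi> \<le> (\<Sum>j<n. cmod (c j))\<^sup>2"
  unfolding stab_extent_def
proof (rule cInf_lower)
  show "(\<Sum>j<n. cmod (c j))\<^sup>2 \<in> {(\<Sum>j<n. cmod (c j))\<^sup>2 | (n::nat) (c::nat \<Rightarrow> complex) (\<phi>::nat \<Rightarrow> complex ^ 2).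
       (\<forall>j<n. \<phi> j \<in> stab_states) \<and> \<Psi> = (\<Sum>j<n. c j *s \<phi> j)}"
    using assms by blast
  show "bdd_below {(\<Sum>j<n. cmod (c j))\<^sup>2 | (n::nat) (c::nat \<Rightarrow> complex) (\<phi>::nat \<Rightarrow> complex ^ 2).
       (\<forall>j<n. \<phi> j \<in> stab_states) \<and> \<Psi> = (\<Sum>j<n. c j *s \<phi> j)}"
    by (rule bdd_belowI[of _ 0]) (auto simp del: sum_power2)
qed


lemma smult_scaleR: "r *\<^sub>R (c *s v) = (of_real r * c) *s (v :: complex ^ 2)"
  unfolding vec_eq_iff vector_scaleR_component vector_smult_component by (simp add: scaleR_conv_of_real)

lemma norm_sq2: "(norm (v :: complex ^ 2))\<^sup>2 = (cmod (v $ 1))\<^sup>2 + (cmod (v $ 2))\<^sup>2"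
  unfolding norm_vec_def L2_set_def sum_2 by simp

lemma wcone_braket:
  assumes "v \<in> wcone w"
  obtains m t c \<phi> where "\<forall>j<(m::nat). 0 \<le> t j \<and> cmod (c j) = 1 \<and> \<phi> j \<in> stab_states"
    "v = (\<Sum>j<m. (of_real (t j) * c j) *s \<phi> j)" "braket w v = of_real (\<Sum>j<m. t j)"
proof -
  from assms obtain m t g where h: "\<forall>j<(m::nat). 0 \<le> t j \<and> g j \<in> gen w"
    and v: "v = (\<Sum>j<m. t j *\<^sub>R g j)" unfolding wcone_def by blast
  have "\<forall>j<m. \<exists>c \<phi>. cmod c = 1 \<and> \<phi> \<in> stab_states \<and> g j = c *s \<phi>"
    using h unfolding gen_def by blast
  then obtain c \<phi> where c: "\<forall>j<m. cmod (c j) = 1 \<and> \<phi> j \<in> stab_states \<and> g j = c j *s \<phi> j"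
    by metis
  have b1: "\<forall>j<m. braket w (g j) = 1" using h unfolding gen_def by blast
  have "v = (\<Sum>j<m. (of_real (t j) * c j) *s \<phi> j)"
    unfolding v by (rule sum.cong) (use c smult_scaleR in auto)
  moreover have "braket w v = of_real (\<Sum>j<m. t j)"
    unfolding v braket_sum braket_scaleR using b1 by simp
  ultimately show ?thesis using that h c by blast
qed

lemma opt:
  assumes wit: "omega_witness w" and vc: "v \<in> wcone w" and nz: "v \<noteq> 0"
  shows "norm ((1 / norm v) *\<^sub>R v) = 1"
    "(cmod (braket w ((1 / norm v) *\<^sub>R v)))\<^sup>2 = stab_extent ((1 / norm v) *\<^sub>R v)"
proof -
  show "norm ((1 / norm v) *\<^sub>R v) = 1" using nz by simp
  obtain m t c \<phi> where h: "\<forall>j<(m::nat). 0 \<le> t j \<and> cmod (c j) = 1 \<and> \<phi> j \<in> stab_states"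
    and v: "v = (\<Sum>j<m. (of_real (t j) * c j) *s \<phi> j)" and b: "braket w v = of_real (\<Sum>j<m. t j)"
    using wcone_braket[OF vc] by blast
  define \<Psi> where "\<Psi> = (1 / norm v) *\<^sub>R v"
  define d where "d = (\<lambda>j. of_real (1 / norm v) * (of_real (t j) * c j))"
  have P: "\<Psi> = (\<Sum>j<m. d j *s \<phi> j)"
    unfolding \<Psi>_def d_def v scaleR_sum_right by (rule sum.cong) (auto simp: smult_scaleR mult.assoc)
  have st: "\<forall>j<m. \<phi> j \<in> stab_states" using h by blast
  have sumd: "(\<Sum>j<m. cmod (d j)) = (1 / norm v) * (\<Sum>j<m. t j)"
    unfolding d_def sum_distrib_left
    by (rule sum.cong) (use h in \<open>auto simp: norm_mult norm_divide\<close>)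
  have bP: "braket w \<Psi> = of_real ((1 / norm v) * (\<Sum>j<m. t j))"
    unfolding \<Psi>_def braket_scaleR b by simp
  have "0 \<le> (\<Sum>j<m. t j)" using h by (auto intro!: sum_nonneg)
  then have nn: "0 \<le> (1 / norm v) * (\<Sum>j<m. t j)" by simp
  have "stab_extent \<Psi> \<le> (\<Sum>j<m. cmod (d j))\<^sup>2" by (rule extent_upper[OF st P])
  also have "\<dots> = (cmod (braket w \<Psi>))\<^sup>2" unfolding sumd bP norm_of_real abs_of_nonneg[OF nn] ..
  finally have "stab_extent \<Psi> \<le> (cmod (braket w \<Psi>))\<^sup>2" .
  moreover have "(cmod (braket w \<Psi>))\<^sup>2 \<le> stab_extent \<Psi>" by (rule extent_lower[OF wit])
  ultimately show "(cmod (braket w ((1 / norm v) *\<^sub>R v)))\<^sup>2 = stab_extent ((1 / norm v) *\<^sub>R v)"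
    unfolding \<Psi>_def by linarith
qed


definition bT :: "complex ^ 2 \<Rightarrow> real" where "bT v = (cmod (v$1))\<^sup>2 + (cmod (v$2))\<^sup>2"
definition bX :: "complex ^ 2 \<Rightarrow> real" where "bX v = 2 * Re (cnj (v$1) * v$2)"
definition bY :: "complex ^ 2 \<Rightarrow> real" where "bY v = 2 * Im (cnj (v$1) * v$2)"
definition bZ :: "complex ^ 2 \<Rightarrow> real" where "bZ v = (cmod (v$1))\<^sup>2 - (cmod (v$2))\<^sup>2"

definition mkH :: "real \<Rightarrow> real \<Rightarrow> real \<Rightarrow> real \<Rightarrow> complex ^ 2 ^ 2" where
  "mkH t x y z = (\<chi> i j. if i = 1 then (if j = 1 then Complex ((t+z)/2) 0 else Complex (x/2) (-y/2))
                          else (if j = 1 then Complex (x/2) (y/2) else Complex ((t-z)/2) 0))"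

lemma mkH_comp:
  "mkH t x y z $ 1 $ 1 = Complex ((t+z)/2) 0" "mkH t x y z $ 1 $ 2 = Complex (x/2) (-y/2)"
  "mkH t x y z $ 2 $ 1 = Complex (x/2) (y/2)" "mkH t x y z $ 2 $ 2 = Complex ((t-z)/2) 0"
  by (simp_all add: mkH_def)

lemma cm2: "cmod a * cmod a = Re a * Re a + Im a * Im a"
  by (metis cmod_power2 power2_eq_square)

lemma proj_mkH: "proj v = mkH (bT v) (bX v) (bY v) (bZ v)"
  unfolding vec_eq_iff forall_2 mkH_comp
  by (simp add: proj_def bT_def bX_def bY_def bZ_def complex_eq_iff cm2 algebra_simps power2_eq_square)

lemma mkH_sum: "(\<Sum>i\<in>I. mkH (t i) (x i) (y i) (z i)) = mkH (\<Sum>i\<in>I. t i) (\<Sum>i\<in>I. x i) (\<Sum>i\<in>I. y i) (\<Sum>i\<in>I. z i)"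
  unfolding vec_eq_iff forall_2 sum_component mkH_comp
  by (simp add: complex_eq_iff Re_sum Im_sum sum_divide_distrib[symmetric] sum_subtractf sum.distrib sum_negf)

lemma dm_mkH:
  assumes "density_matrix \<rho>"
  shows "\<rho> = mkH 1 (2 * Re (\<rho>$2$1)) (2 * Im (\<rho>$2$1)) (Re (\<rho>$1$1) - Re (\<rho>$2$2))"
proof -
  have h: "\<forall>i j. \<rho> $ i $ j = cnj (\<rho> $ j $ i)" and tr: "\<rho> $ 1 $ 1 + \<rho> $ 2 $ 2 = 1"
    using assms unfolding density_matrix_def by blast+
  have i1: "Im (\<rho>$1$1) = 0" using arg_cong[OF h[rule_format, of 1 1], of Im] by simp
  have i2: "Im (\<rho>$2$2) = 0" using arg_cong[OF h[rule_format, of 2 2], of Im] by simp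
  have r12: "\<rho>$1$2 = cnj (\<rho>$2$1)" using h by blast
  have t: "Re (\<rho>$1$1) + Re (\<rho>$2$2) = 1" using arg_cong[OF tr, of Re] by simp
  show ?thesis
    unfolding vec_eq_iff forall_2 mkH_comp
    using i1 i2 r12 t by (simp add: complex_eq_iff)
qed

lemma proj_zero: "proj 0 = 0"
  by (simp add: proj_def vec_eq_iff)

lemma proj_scaleR: "proj (r *\<^sub>R v) = (r\<^sup>2) *\<^sub>R proj v"
  unfolding vec_eq_iff proj_def vector_scaleR_component vec_lambda_beta by (simp add: scaleR_conv_of_real power2_eq_square)

lemma bT_norm: "bT v = (norm v)\<^sup>2"
  by (simp add: bT_def norm_sq2)

definition realizable :: "real \<Rightarrow> real \<Rightarrow> real \<Rightarrow> bool" where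
  "realizable x y z \<longleftrightarrow> (\<exists>w n v. omega_witness w \<and> (\<forall>i<(n::nat). v i \<in> wcone w) \<and>
     (\<Sum>i<n. bT (v i)) = 1 \<and> (\<Sum>i<n. bX (v i)) = x \<and> (\<Sum>i<n. bY (v i)) = y \<and> (\<Sum>i<n. bZ (v i)) = z)"

lemma lemmaA:
  assumes dm: "density_matrix \<rho>"
    and re: "realizable (2 * Re (\<rho>$2$1)) (2 * Im (\<rho>$2$1)) (Re (\<rho>$1$1) - Re (\<rho>$2$2))"
  shows "\<exists>w. omega_witness w \<and> \<rho> \<in> B_omega w"
proof -
  obtain w n v where wit: "omega_witness w" and vc: "\<forall>i<(n::nat). v i \<in> wcone w"
    and sT: "(\<Sum>i<n. bT (v i)) = 1" and sX: "(\<Sum>i<n. bX (v i)) = 2 * Re (\<rho>$2$1)"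
    and sY: "(\<Sum>i<n. bY (v i)) = 2 * Im (\<rho>$2$1)" and sZ: "(\<Sum>i<n. bZ (v i)) = Re (\<rho>$1$1) - Re (\<rho>$2$2)"
    using re unfolding realizable_def by blast
  have "\<rho> = (\<Sum>i<n. proj (v i))"
    unfolding proj_mkH mkH_sum sT sX sY sZ by (rule dm_mkH[OF dm])
  define I where "I = {i. i < n \<and> v i \<noteq> 0}"
  define \<Psi> where "\<Psi> = (\<lambda>i. (1 / norm (v i)) *\<^sub>R v i)"
  have fI: "finite I" unfolding I_def by simp
  have "(\<Sum>i<n. proj (v i)) = (\<Sum>i\<in>I. proj (v i))"
    by (rule sum.mono_neutral_right) (auto simp: I_def proj_zero)
  also have "\<dots> = (\<Sum>i\<in>I. (norm (v i))\<^sup>2 *\<^sub>R proj (\<Psi> i))"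
  proof (rule sum.cong)
    fix i assume "i \<in> I"
    then have "v i \<noteq> 0" unfolding I_def by blast
    then have "v i = norm (v i) *\<^sub>R \<Psi> i" unfolding \<Psi>_def by simp
    then show "proj (v i) = (norm (v i))\<^sup>2 *\<^sub>R proj (\<Psi> i)"
      by (metis proj_scaleR)
  qed simp
  finally have rho: "\<rho> = (\<Sum>i\<in>I. (norm (v i))\<^sup>2 *\<^sub>R proj (\<Psi> i))"
    using \<open>\<rho> = _\<close> by simp
  have w1: "(\<Sum>i\<in>I. (norm (v i))\<^sup>2) = 1"
  proof -
    have "(\<Sum>i\<in>I. (norm (v i))\<^sup>2) = (\<Sum>i<n. (norm (v i))\<^sup>2)"
      by (rule sum.mono_neutral_left) (auto simp: I_def)
    then show ?thesis using sT by (simp add: bT_norm)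
  qed
  have "\<rho> \<in> B_omega w"
    unfolding rho B_omega_def
  proof (rule convex_sum[OF fI convex_convex_hull w1])
    fix i assume "i \<in> I"
    then have "v i \<in> wcone w" "v i \<noteq> 0" using vc unfolding I_def by auto
    from opt[OF wit this]
    have "proj (\<Psi> i) \<in> {proj \<Psi> | \<Psi>. norm \<Psi> = 1 \<and> (cmod (braket w \<Psi>))\<^sup>2 = stab_extent \<Psi>}"
      unfolding \<Psi>_def by blast
    then show "proj (\<Psi> i) \<in> convex hull {proj \<Psi> | \<Psi>. norm \<Psi> = 1 \<and> (cmod (braket w \<Psi>))\<^sup>2 = stab_extent \<Psi>}"
      by (rule hull_inc)
  qed simp
  then show ?thesis using wit by blast
qed


lemma ket_comp [simp]: "ket a b $ 1 = a" "ket a b $ 2 = b"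
  by (simp_all add: ket_def)

lemma mkH_mult:
  "Re (braket (ket p q) (mkH t x y z *v ket p q)) =
     (t+z)/2 * (cmod p)\<^sup>2 + (t-z)/2 * (cmod q)\<^sup>2 + Re (cnj p * Complex (x/2) (-y/2) * q) + Re (cnj q * Complex (x/2) (y/2) * p)"
  apply (simp add: braket_def matrix_vector_mult_def sum_2 mkH_comp algebra_simps cm2 power2_eq_square)
  apply (simp add: field_simps)
  done

lemma dm_ball:
  assumes "density_matrix \<rho>"
  shows "(2 * Re (\<rho>$2$1))\<^sup>2 + (2 * Im (\<rho>$2$1))\<^sup>2 + (Re (\<rho>$1$1) - Re (\<rho>$2$2))\<^sup>2 \<le> 1"
proof -
  define x where "x = 2 * Re (\<rho>$2$1)"
  define y where "y = 2 * Im (\<rho>$2$1)"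
  define z where "z = Re (\<rho>$1$1) - Re (\<rho>$2$2)"
  have r: "\<rho> = mkH 1 x y z" unfolding x_def y_def z_def by (rule dm_mkH[OF assms])
  have psd: "\<And>v. Re (braket v (\<rho> *v v)) \<ge> 0" using assms unfolding density_matrix_def by blast
  have e1: "Re (braket (ket (Complex (1-z) 0) (Complex (-x) (-y))) (\<rho> *v ket (Complex (1-z) 0) (Complex (-x) (-y))))
      = (1-z) * (1 - x\<^sup>2 - y\<^sup>2 - z\<^sup>2) / 2"
    unfolding r mkH_mult by (simp add: cm2 power2_eq_square field_simps)
  have e2: "Re (braket (ket (Complex (-x) y) (Complex (1+z) 0)) (\<rho> *v ket (Complex (-x) y) (Complex (1+z) 0)))
      = (1+z) * (1 - x\<^sup>2 - y\<^sup>2 - z\<^sup>2) / 2"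
    unfolding r mkH_mult by (simp add: cm2 power2_eq_square field_simps)
  have "0 \<le> (1-z) * (1 - x\<^sup>2 - y\<^sup>2 - z\<^sup>2)" using psd[of "ket (Complex (1-z) 0) (Complex (-x) (-y))"] e1 by simp
  moreover have "0 \<le> (1+z) * (1 - x\<^sup>2 - y\<^sup>2 - z\<^sup>2)" using psd[of "ket (Complex (-x) y) (Complex (1+z) 0)"] e2 by simp
  ultimately have "0 \<le> 1 - x\<^sup>2 - y\<^sup>2 - z\<^sup>2"
    by (cases "1 - z > 0") (auto simp: zero_le_mult_iff)
  then show ?thesis unfolding x_def[symmetric] y_def[symmetric] z_def[symmetric] by simp
qed

lemma mkH_scaleR: "r *\<^sub>R mkH t x y z = mkH (r*t) (r*x) (r*y) (r*z)"
  unfolding vec_eq_iff forall_2 mkH_comp vector_scaleR_component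
  by (simp add: complex_eq_iff algebra_simps)

lemma mkH_add: "mkH t x y z + mkH t' x' y' z' = mkH (t+t') (x+x') (y+y') (z+z')"
  unfolding vec_eq_iff forall_2 mkH_comp vector_add_component
  by (simp add: complex_eq_iff field_simps)

lemma mkH_eqI: "t = t' \<Longrightarrow> x = x' \<Longrightarrow> y = y' \<Longrightarrow> z = z' \<Longrightarrow> mkH t x y z = mkH t' x' y' z'"
  by simp

lemma proj_stabs:
  "proj (ket 1 0) = mkH 1 0 0 1" "proj (ket 0 1) = mkH 1 0 0 (-1)"
  "proj (ket (1 / sqrt 2) (1 / sqrt 2)) = mkH 1 1 0 0"
  "proj (ket (1 / sqrt 2) (- 1 / sqrt 2)) = mkH 1 (-1) 0 0"
  "proj (ket (1 / sqrt 2) (\<i> / sqrt 2)) = mkH 1 0 1 0"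
  "proj (ket (1 / sqrt 2) (- \<i> / sqrt 2)) = mkH 1 0 (-1) 0"
  "proj (ket (1 / complex_of_real (sqrt 2)) (1 / complex_of_real (sqrt 2))) = mkH 1 1 0 0"
  "proj (ket (1 / complex_of_real (sqrt 2)) (- (1 / complex_of_real (sqrt 2)))) = mkH 1 (-1) 0 0"
  "proj (ket (1 / complex_of_real (sqrt 2)) (\<i> / complex_of_real (sqrt 2))) = mkH 1 0 1 0"
  "proj (ket (1 / complex_of_real (sqrt 2)) (- (\<i> / complex_of_real (sqrt 2)))) = mkH 1 0 (-1) 0"
  unfolding proj_mkH bT_def bX_def bY_def bZ_def ket_comp
  by (simp_all add: norm_divide power_divide)

lemma stab_hull:
  assumes "\<bar>x\<bar> + \<bar>y\<bar> + \<bar>z\<bar> \<le> 1"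
  shows "mkH 1 x y z \<in> convex hull (proj ` stab_states)"
proof -
  define m where "m = 1 - \<bar>x\<bar> - \<bar>y\<bar> - \<bar>z\<bar>"
  define st where "st = [ket 1 0, ket 0 1, ket (1 / sqrt 2) (1 / sqrt 2), ket (1 / sqrt 2) (- 1 / sqrt 2),
     ket (1 / sqrt 2) (\<i> / sqrt 2), ket (1 / sqrt 2) (- \<i> / sqrt 2)]"
  define a where "a = [max z 0 + m/2, max (-z) 0 + m/2, max x 0, max (-x) 0, max y 0, max (-y) 0]"
  have six: "{..<6::nat} = {0,1,2,3,4,5}" by auto
  have "(\<Sum>i\<in>{..<6::nat}. (a!i) *\<^sub>R proj (st!i)) \<in> convex hull (proj ` stab_states)"
  proof (rule convex_sum)
    show "(\<Sum>i\<in>{..<6::nat}. a!i) = 1" unfolding six a_def m_def by (simp add: max_def)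
    show "\<And>i. i \<in> {..<6} \<Longrightarrow> 0 \<le> a!i" unfolding six a_def m_def using assms by auto
    show "\<And>i. i \<in> {..<6} \<Longrightarrow> proj (st!i) \<in> convex hull (proj ` stab_states)"
    proof -
      fix i :: nat assume "i \<in> {..<6}"
      then have "st!i \<in> stab_states" unfolding six st_def stab_states_def by auto
      then show "proj (st!i) \<in> convex hull (proj ` stab_states)" by (intro hull_inc imageI)
    qed
  qed auto
  moreover have "(\<Sum>i\<in>{..<6::nat}. (a!i) *\<^sub>R proj (st!i)) = mkH 1 x y z"
    unfolding six st_def a_def
    apply (simp add: proj_stabs mkH_scaleR mkH_add)
    apply (rule mkH_eqI)
       apply (simp_all add: m_def max_def)
    done
  ultimately show ?thesis by simp
qed


definition qT :: "real \<Rightarrow> real \<Rightarrow> real \<Rightarrow> real \<Rightarrow> real" where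
  "qT r3 X Y Z = X*X + Y*Y + Z*Z + (1+r3)/2*(X*Y+X*Z+Y*Z)"
definition qX :: "real \<Rightarrow> real \<Rightarrow> real \<Rightarrow> real \<Rightarrow> real" where
  "qX r3 X Y Z = X*X + (1+r3)/2*(X*Y+X*Z) + (r3-1)/2*(Y*Z)"
definition qY :: "real \<Rightarrow> real \<Rightarrow> real \<Rightarrow> real \<Rightarrow> real" where
  "qY r3 X Y Z = Y*Y + (1+r3)/2*(X*Y+Y*Z) + (r3-1)/2*(X*Z)"
definition qZ :: "real \<Rightarrow> real \<Rightarrow> real \<Rightarrow> real \<Rightarrow> real" where
  "qZ r3 X Y Z = Z*Z + (1+r3)/2*(X*Z+Y*Z) + (r3-1)/2*(X*Y)"
definition fF :: "real \<Rightarrow> real \<Rightarrow> real \<Rightarrow> real \<Rightarrow> real \<Rightarrow> real" where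
  "fF r3 a b c t = a - (2 - r3)*(b + c - t)"

lemma idT:
  assumes "r3*r3 = 3"
  shows "qT r3 (fF r3 rx ry rz t) (fF r3 ry rx rz t) (fF r3 rz rx ry t) =
    (3 - r3) * (fF r3 rx ry rz t + fF r3 ry rx rz t + fF r3 rz rx ry t) * t - (27 - 15 * r3)/2 * (t*t - rx*rx - ry*ry - rz*rz)"
proof -
  have rr: "r3 * (r3 * X) = 3 * X" for X using assms by (metis mult.assoc)
  show ?thesis unfolding qT_def qX_def fF_def by (simp add: field_simps rr assms)
qed

lemma idX:
  assumes "r3*r3 = 3"
  shows "qX r3 (fF r3 rx ry rz t) (fF r3 ry rx rz t) (fF r3 rz rx ry t) =
    (3 - r3) * (fF r3 rx ry rz t + fF r3 ry rx rz t + fF r3 rz rx ry t) * rx + (9 * r3 - 15)/2 * (t*t - rx*rx - ry*ry - rz*rz)"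
proof -
  have rr: "r3 * (r3 * X) = 3 * X" for X using assms by (metis mult.assoc)
  show ?thesis unfolding qT_def qX_def fF_def by (simp add: field_simps rr assms)
qed

lemma idY:
  assumes "r3*r3 = 3"
  shows "qY r3 (fF r3 rx ry rz t) (fF r3 ry rx rz t) (fF r3 rz rx ry t) =
    (3 - r3) * (fF r3 rx ry rz t + fF r3 ry rx rz t + fF r3 rz rx ry t) * ry + (9 * r3 - 15)/2 * (t*t - rx*rx - ry*ry - rz*rz)"
proof -
  have rr: "r3 * (r3 * X) = 3 * X" for X using assms by (metis mult.assoc)
  show ?thesis unfolding qY_def fF_def by (simp add: field_simps rr assms)
qed

lemma idZ:
  assumes "r3*r3 = 3"
  shows "qZ r3 (fF r3 rx ry rz t) (fF r3 ry rx rz t) (fF r3 rz rx ry t) =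
    (3 - r3) * (fF r3 rx ry rz t + fF r3 ry rx rz t + fF r3 rz rx ry t) * rz + (9 * r3 - 15)/2 * (t*t - rx*rx - ry*ry - rz*rz)"
proof -
  have rr: "r3 * (r3 * X) = 3 * X" for X using assms by (metis mult.assoc)
  show ?thesis unfolding qZ_def fF_def by (simp add: field_simps rr assms)
qed

definition s3 :: real where "s3 = sqrt 3"

lemma s3sq: "s3 * s3 = 3" unfolding s3_def by simp

lemma s3rr: "s3 * (s3 * X) = 3 * X" using s3sq by (metis mult.assoc)

lemma s3_bounds: "1.7 < s3" "s3 < 1.8"
proof -
  have "(1.7::real)\<^sup>2 < 3" by (simp add: power2_eq_square)
  then show "1.7 < s3" unfolding s3_def by (rule real_less_rsqrt)
  have "sqrt 3 < sqrt ((1.8::real)\<^sup>2)" by (simp only: real_sqrt_less_iff) (simp add: power2_eq_square)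
  then show "s3 < 1.8" unfolding s3_def by simp
qed

definition gx :: "complex ^ 2" where "gx = ket (Complex ((s3+1)/4) ((s3-1)/4)) (Complex ((s3+1)/4) ((s3-1)/4))"
definition gy :: "complex ^ 2" where "gy = ket (Complex ((s3+1)/4) (-(s3-1)/4)) (Complex ((s3-1)/4) ((s3+1)/4))"
definition gz :: "complex ^ 2" where "gz = ket 1 0"
definition wF :: "complex ^ 2" where "wF = ket 1 (Complex ((s3-1)/2) ((s3-1)/2))"

definition fv :: "real \<Rightarrow> real \<Rightarrow> real \<Rightarrow> complex ^ 2" where
  "fv X Y Z = X *\<^sub>R gx + Y *\<^sub>R gy + Z *\<^sub>R gz"

lemma fv_comp: "fv X Y Z $ 1 = Complex (X*(s3+1)/4 + Y*(s3+1)/4 + Z) (X*(s3-1)/4 - Y*(s3-1)/4)"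
  "fv X Y Z $ 2 = Complex (X*(s3+1)/4 + Y*(s3-1)/4) (X*(s3-1)/4 + Y*(s3+1)/4)"
  unfolding fv_def gx_def gy_def gz_def vector_add_component vector_scaleR_component ket_comp
  by (simp_all add: complex_eq_iff scaleR_conv_of_real field_simps)

lemma fv_bloch:
  "bT (fv X Y Z) = qT s3 X Y Z" "bX (fv X Y Z) = qX s3 X Y Z"
  "bY (fv X Y Z) = qY s3 X Y Z" "bZ (fv X Y Z) = qZ s3 X Y Z"
  unfolding bT_def bX_def bY_def bZ_def fv_comp qT_def qX_def qY_def qZ_def
  by (simp_all add: cm2 power2_eq_square field_simps s3rr s3sq)


lemma cmod_le1: "Re z * Re z + Im z * Im z \<le> 1 \<Longrightarrow> cmod z \<le> 1"
  by (simp add: cmod_def power2_eq_square)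

lemma wF_wit: "omega_witness wF"
  unfolding omega_witness_def stab_states_def ball_simps
  using s3_bounds
  by (intro conjI cmod_le1; simp add: braket_def sum_2 wF_def power2_eq_square field_simps s3rr s3sq)

lemma stab_mem:
  "ket 1 0 \<in> stab_states" "ket 0 1 \<in> stab_states"
  "ket (1 / sqrt 2) (1 / sqrt 2) \<in> stab_states" "ket (1 / sqrt 2) (- 1 / sqrt 2) \<in> stab_states"
  "ket (1 / sqrt 2) (\<i> / sqrt 2) \<in> stab_states" "ket (1 / sqrt 2) (- \<i> / sqrt 2) \<in> stab_states"
  unfolding stab_states_def by blast+

lemma cmod_Complex1: "a * a + b * b = 1 \<Longrightarrow> cmod (Complex a b) = 1"
  by (simp add: cmod_def power2_eq_square)

lemma gen_gx: "gx \<in> gen wF"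
proof -
  have b: "braket wF gx = 1"
    by (simp add: braket_def sum_2 wF_def gx_def complex_eq_iff field_simps s3rr s3sq)
  have c: "cmod (Complex (sqrt 2 * (s3+1)/4) (sqrt 2 * (s3-1)/4)) = 1"
    by (rule cmod_Complex1) (simp add: field_simps s3rr s3sq)
  have e: "gx = Complex (sqrt 2 * (s3+1)/4) (sqrt 2 * (s3-1)/4) *s ket (1 / sqrt 2) (1 / sqrt 2)"
    unfolding vec_eq_iff forall_2 by (simp add: gx_def complex_eq_iff field_simps)
  show ?thesis unfolding gen_def using b c e stab_mem by blast
qed

lemma gen_gy: "gy \<in> gen wF"
proof -
  have b: "braket wF gy = 1"
    by (simp add: braket_def sum_2 wF_def gy_def complex_eq_iff field_simps s3rr s3sq)
  have c: "cmod (Complex (sqrt 2 * (s3+1)/4) (- sqrt 2 * (s3-1)/4)) = 1"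
    by (rule cmod_Complex1) (simp add: field_simps s3rr s3sq)
  have e: "gy = Complex (sqrt 2 * (s3+1)/4) (- sqrt 2 * (s3-1)/4) *s ket (1 / sqrt 2) (\<i> / sqrt 2)"
    unfolding vec_eq_iff forall_2 by (simp add: gy_def complex_eq_iff field_simps)
  show ?thesis unfolding gen_def using b c e stab_mem by blast
qed

lemma gen_gz: "gz \<in> gen wF"
proof -
  have b: "braket wF gz = 1"
    by (simp add: braket_def sum_2 wF_def gz_def)
  have e: "gz = 1 *s ket 1 0"
    unfolding vec_eq_iff forall_2 by (simp add: gz_def)
  have c: "cmod (1::complex) = 1" by simp
  show ?thesis unfolding gen_def using b c e stab_mem(1) by blast
qed

lemma fv_cone:
  assumes "0 \<le> X" "0 \<le> Y" "0 \<le> Z"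
  shows "fv X Y Z \<in> wcone wF"
proof -
  have three: "{..<3::nat} = {0,1,2}" by auto
  have "\<forall>j<3. 0 \<le> [X,Y,Z]!j \<and> [gx,gy,gz]!j \<in> gen wF"
    using assms gen_gx gen_gy gen_gz by (auto simp: less_Suc_eq numeral_3_eq_3)
  moreover have "fv X Y Z = (\<Sum>j<3. ([X,Y,Z]!j) *\<^sub>R ([gx,gy,gz]!j))"
    unfolding three fv_def by simp
  ultimately show ?thesis unfolding wcone_def by blast
qed


lemma q_scale:
  assumes "D \<noteq> 0"
  shows "qT r (X/D) (Y/D) (Z/D) = qT r X Y Z / (D*D)" "qX r (X/D) (Y/D) (Z/D) = qX r X Y Z / (D*D)"
    "qY r (X/D) (Y/D) (Z/D) = qY r X Y Z / (D*D)" "qZ r (X/D) (Y/D) (Z/D) = qZ r X Y Z / (D*D)"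
  using assms by (simp_all add: qT_def qX_def qY_def qZ_def field_simps)

lemma q_axis:
  "qT r X 0 0 = X*X" "qX r X 0 0 = X*X" "qY r X 0 0 = 0" "qZ r X 0 0 = 0"
  "qT r 0 Y 0 = Y*Y" "qX r 0 Y 0 = 0" "qY r 0 Y 0 = Y*Y" "qZ r 0 Y 0 = 0"
  "qT r 0 0 Z = Z*Z" "qX r 0 0 Z = 0" "qY r 0 0 Z = 0" "qZ r 0 0 Z = Z*Z"
  by (simp_all add: qT_def qX_def qY_def qZ_def)

lemma face:
  assumes ball: "x*x + y*y + z*z \<le> 1" and sm: "x + y + z > 1"
    and Fx: "0 \<le> fF s3 x y z 1" and Fy: "0 \<le> fF s3 y x z 1" and Fz: "0 \<le> fF s3 z x y 1"
  shows "realizable x y z"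
proof -
  define K where "K = 3 - s3"
  have K: "K > 0" using s3_bounds unfolding K_def by simp
  define mx where "mx = fF s3 x y z 1 / K"
  define my where "my = fF s3 y x z 1 / K"
  define mz where "mz = fF s3 z x y 1 / K"
  define SF where "SF = fF s3 x y z 1 + fF s3 y x z 1 + fF s3 z x y 1"
  define SM where "SM = mx + my + mz"
  have SMK: "SM = SF / K" unfolding SM_def SF_def mx_def my_def mz_def by (simp add: add_divide_distrib)
  have "SF - K = (2 * s3 - 3)*(x+y+z-1)" unfolding SF_def K_def fF_def by (simp add: algebra_simps)
  moreover have "(2 * s3 - 3)*(x+y+z-1) > 0" using s3_bounds sm by (intro mult_pos_pos) auto
  ultimately have SFK: "SF > K" by simp
  then have SM1: "SM > 1" unfolding SMK using K by simp
  have mx0: "mx \<ge> 0" "my \<ge> 0" "mz \<ge> 0" unfolding mx_def my_def mz_def using Fx Fy Fz K by auto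
  define \<phi> where "\<phi> = (\<lambda>s. (x - s*mx)*(x - s*mx) + (y - s*my)*(y - s*my) + (z - s*mz)*(z - s*mz) - (1 - s*SM)*(1 - s*SM))"
  have "\<phi> 0 \<le> 0" unfolding \<phi>_def using ball by simp
  moreover have "0 \<le> \<phi> (1/SM)" unfolding \<phi>_def using SM1 by simp
  moreover have "0 \<le> 1/SM" using SM1 by simp
  moreover have "continuous_on {0..1/SM} \<phi>" unfolding \<phi>_def by (intro continuous_intros)
  ultimately obtain s where s0: "0 \<le> s" and s1: "s \<le> 1/SM" and phs: "\<phi> s = 0"
    using IVT'[of \<phi> 0 0 "1/SM"] by blast
  have sSM: "s * SM \<le> 1" using s1 SM1 by (simp add: field_simps)
  have slt: "s < 1" using sSM SM1 s0
    by (metis less_le_trans linorder_not_le mult.commute mult_less_cancel_left1 not_one_le_zero)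
  define t where "t = 1 - s*SM"
  define rx where "rx = x - s*mx"
  define ry where "ry = y - s*my"
  define rz where "rz = z - s*mz"
  have t0: "t \<ge> 0" unfolding t_def using sSM by simp
  have ceq: "t*t - rx*rx - ry*ry - rz*rz = 0" using phs unfolding \<phi>_def t_def rx_def ry_def rz_def by simp
  define Gx where "Gx = fF s3 rx ry rz t"
  define Gy where "Gy = fF s3 ry rx rz t"
  define Gz where "Gz = fF s3 rz rx ry t"
  have KF: "K * mx = fF s3 x y z 1" "K * my = fF s3 y x z 1" "K * mz = fF s3 z x y 1"
    unfolding mx_def my_def mz_def using K by simp_all
  have Gx: "Gx = (1 - s) * fF s3 x y z 1"
  proof -
    have e: "Gx = fF s3 x y z 1 - s * ((3 - s3) * mx)"
      unfolding Gx_def fF_def rx_def ry_def rz_def t_def SM_def by (simp add: algebra_simps)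
    show ?thesis unfolding e KF(1)[unfolded K_def] by (simp add: algebra_simps)
  qed
  have Gy: "Gy = (1 - s) * fF s3 y x z 1"
  proof -
    have e: "Gy = fF s3 y x z 1 - s * ((3 - s3) * my)"
      unfolding Gy_def fF_def rx_def ry_def rz_def t_def SM_def by (simp add: algebra_simps)
    show ?thesis unfolding e KF(2)[unfolded K_def] by (simp add: algebra_simps)
  qed
  have Gz: "Gz = (1 - s) * fF s3 z x y 1"
  proof -
    have e: "Gz = fF s3 z x y 1 - s * ((3 - s3) * mz)"
      unfolding Gz_def fF_def rx_def ry_def rz_def t_def SM_def by (simp add: algebra_simps)
    show ?thesis unfolding e KF(3)[unfolded K_def] by (simp add: algebra_simps)
  qed
  have G0: "Gx \<ge> 0" "Gy \<ge> 0" "Gz \<ge> 0" unfolding Gx Gy Gz using slt Fx Fy Fz by simp_all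
  define SG where "SG = Gx + Gy + Gz"
  have SG: "SG = (1 - s) * SF" unfolding SG_def Gx Gy Gz SF_def by (simp add: algebra_simps)
  have SGp: "SG > 0" unfolding SG using slt SFK K by simp
  define D where "D = sqrt (K * SG)"
  have Dp: "D > 0" unfolding D_def using K SGp by simp
  have DD: "D * D = K * SG" unfolding D_def using K SGp by simp
  define w where "w = fv (Gx/D) (Gy/D) (Gz/D)"
  have wT: "bT w = t"
  proof -
    have "bT w = qT s3 Gx Gy Gz / (D*D)" unfolding w_def fv_bloch using Dp by (simp add: q_scale)
    also have "qT s3 Gx Gy Gz = K * SG * t"
      unfolding Gx_def Gy_def Gz_def idT[OF s3sq] ceq using SG_def Gx_def Gy_def Gz_def K_def by simp
    finally show ?thesis unfolding DD using K SGp by simp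
  qed
  have wX: "bX w = rx"
  proof -
    have "bX w = qX s3 Gx Gy Gz / (D*D)" unfolding w_def fv_bloch using Dp by (simp add: q_scale)
    also have "qX s3 Gx Gy Gz = K * SG * rx"
      unfolding Gx_def Gy_def Gz_def idX[OF s3sq] ceq using SG_def Gx_def Gy_def Gz_def K_def by simp
    finally show ?thesis unfolding DD using K SGp by simp
  qed
  have wY: "bY w = ry"
  proof -
    have "bY w = qY s3 Gx Gy Gz / (D*D)" unfolding w_def fv_bloch using Dp by (simp add: q_scale)
    also have "qY s3 Gx Gy Gz = K * SG * ry"
      unfolding Gx_def Gy_def Gz_def idY[OF s3sq] ceq using SG_def Gx_def Gy_def Gz_def K_def by simp
    finally show ?thesis unfolding DD using K SGp by simp
  qed
  have wZ: "bZ w = rz"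
  proof -
    have "bZ w = qZ s3 Gx Gy Gz / (D*D)" unfolding w_def fv_bloch using Dp by (simp add: q_scale)
    also have "qZ s3 Gx Gy Gz = K * SG * rz"
      unfolding Gx_def Gy_def Gz_def idZ[OF s3sq] ceq using SG_def Gx_def Gy_def Gz_def K_def by simp
    finally show ?thesis unfolding DD using K SGp by simp
  qed
  define u1 where "u1 = fv (sqrt (s*mx)) 0 0"
  define u2 where "u2 = fv 0 (sqrt (s*my)) 0"
  define u3 where "u3 = fv 0 0 (sqrt (s*mz))"
  have smx: "s*mx \<ge> 0" "s*my \<ge> 0" "s*mz \<ge> 0" using s0 mx0 by simp_all
  have u1b: "bT u1 = s*mx" "bX u1 = s*mx" "bY u1 = 0" "bZ u1 = 0"
    unfolding u1_def fv_bloch q_axis using smx by simp_all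
  have u2b: "bT u2 = s*my" "bX u2 = 0" "bY u2 = s*my" "bZ u2 = 0"
    unfolding u2_def fv_bloch q_axis using smx by simp_all
  have u3b: "bT u3 = s*mz" "bX u3 = 0" "bY u3 = 0" "bZ u3 = s*mz"
    unfolding u3_def fv_bloch q_axis using smx by simp_all
  define v where "v = (\<lambda>i::nat. [w, u1, u2, u3] ! i)"
  have four: "{..<4::nat} = {0,1,2,3}" by auto
  have vc: "\<forall>i<4. v i \<in> wcone wF"
  proof -
    have "w \<in> wcone wF" unfolding w_def using G0 Dp by (intro fv_cone) simp_all
    moreover have "u1 \<in> wcone wF" "u2 \<in> wcone wF" "u3 \<in> wcone wF"
      unfolding u1_def u2_def u3_def using smx by (auto intro!: fv_cone)
    ultimately show ?thesis unfolding v_def by (auto simp: less_Suc_eq numeral_eq_Suc)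
  qed
  have sT: "(\<Sum>i<4. bT (v i)) = 1"
    unfolding four v_def using wT u1b u2b u3b by (simp add: t_def SM_def algebra_simps)
  have sX: "(\<Sum>i<4. bX (v i)) = x"
    unfolding four v_def using wX u1b u2b u3b by (simp add: rx_def)
  have sY: "(\<Sum>i<4. bY (v i)) = y"
    unfolding four v_def using wY u1b u2b u3b by (simp add: ry_def)
  have sZ: "(\<Sum>i<4. bZ (v i)) = z"
    unfolding four v_def using wZ u1b u2b u3b by (simp add: rz_def)
  show ?thesis unfolding realizable_def using wF_wit vc sT sX sY sZ by blast
qed


definition eW :: "real \<Rightarrow> real \<Rightarrow> complex ^ 2" where
  "eW cc ss = ket 1 (Complex (sqrt 2 * cc - 1) (sqrt 2 * ss))"
definition eG :: "real \<Rightarrow> real \<Rightarrow> complex ^ 2" where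
  "eG cc ss = ket (Complex (cc / sqrt 2) (ss / sqrt 2)) (Complex (cc / sqrt 2) (ss / sqrt 2))"
definition ev :: "real \<Rightarrow> real \<Rightarrow> real \<Rightarrow> real \<Rightarrow> complex ^ 2" where
  "ev cc ss a b = a *\<^sub>R ket 1 0 + b *\<^sub>R eG cc ss"

lemma r2rr: "sqrt 2 * (sqrt 2 * X) = 2 * X" by (simp add: mult.assoc[symmetric])

lemma ev_comp: "ev cc ss a b $ 1 = Complex (a + b * cc / sqrt 2) (b * ss / sqrt 2)"
  "ev cc ss a b $ 2 = Complex (b * cc / sqrt 2) (b * ss / sqrt 2)"
  unfolding ev_def eG_def vector_add_component vector_scaleR_component ket_comp
  by (simp_all add: complex_eq_iff scaleR_conv_of_real)

lemma ev_bloch: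
  assumes "cc * cc + ss * ss = 1"
  shows "bT (ev cc ss a b) = a*a + sqrt 2 * a * b * cc + b*b"
    "bX (ev cc ss a b) = sqrt 2 * a * b * cc + b*b"
    "bY (ev cc ss a b) = sqrt 2 * a * b * ss"
    "bZ (ev cc ss a b) = a*a + sqrt 2 * a * b * cc"
proof -
  have e: "b * (b * (cc * cc)) + b * (b * (ss * ss)) = b * b" using assms by (metis distrib_left mult.assoc mult.commute mult_1_right)
  show "bT (ev cc ss a b) = a*a + sqrt 2 * a * b * cc + b*b"
    "bX (ev cc ss a b) = sqrt 2 * a * b * cc + b*b"
    "bY (ev cc ss a b) = sqrt 2 * a * b * ss"
    "bZ (ev cc ss a b) = a*a + sqrt 2 * a * b * cc"
    unfolding bT_def bX_def bY_def bZ_def ev_comp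
    using e by (simp_all add: cm2 power2_eq_square field_simps r2rr)
qed

lemma eW_wit:
  assumes cs: "cc * cc + ss * ss = 1" and h1: "sqrt 2 * (cc - ss) \<ge> 1" and h2: "sqrt 2 * (cc + ss) \<ge> 1"
  shows "omega_witness (eW cc ss)"
  unfolding omega_witness_def stab_states_def ball_simps
  using cs h1 h2
  by (intro conjI cmod_le1; simp add: braket_def sum_2 eW_def power2_eq_square field_simps r2rr)

lemma eG_gen:
  assumes cs: "cc * cc + ss * ss = 1"
  shows "eG cc ss \<in> gen (eW cc ss)" "ket 1 0 \<in> gen (eW cc ss)"
proof -
  have b: "braket (eW cc ss) (eG cc ss) = 1"
  proof -
    have "cc * (cc * sqrt 2) + ss * (ss * sqrt 2) = sqrt 2"
      using cs by (metis distrib_right mult.assoc mult_1)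
    then show ?thesis by (simp add: braket_def sum_2 eW_def eG_def complex_eq_iff field_simps r2rr)
  qed
  have c: "cmod (Complex cc ss) = 1" by (rule cmod_Complex1[OF cs])
  have e: "eG cc ss = Complex cc ss *s ket (1 / sqrt 2) (1 / sqrt 2)"
    unfolding vec_eq_iff forall_2 by (simp add: eG_def complex_eq_iff field_simps)
  show "eG cc ss \<in> gen (eW cc ss)" unfolding gen_def using b c e stab_mem by blast
  have b2: "braket (eW cc ss) (ket 1 0) = 1" by (simp add: braket_def sum_2 eW_def)
  have e2: "ket 1 0 = 1 *s ket 1 0" by (simp add: vec_eq_iff)
  have c2: "cmod (1::complex) = 1" by simp
  show "ket 1 0 \<in> gen (eW cc ss)" unfolding gen_def using b2 c2 e2 stab_mem(1) by blast
qed

lemma ev_cone: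
  assumes cs: "cc * cc + ss * ss = 1" and "0 \<le> a" "0 \<le> b"
  shows "ev cc ss a b \<in> wcone (eW cc ss)"
proof -
  have two: "{..<2::nat} = {0,1}" by auto
  have "\<forall>j<2. 0 \<le> [a,b]!j \<and> [ket 1 0, eG cc ss]!j \<in> gen (eW cc ss)"
    using assms eG_gen[OF cs] by (auto simp: less_Suc_eq numeral_2_eq_2)
  moreover have "ev cc ss a b = (\<Sum>j<2. ([a,b]!j) *\<^sub>R ([ket 1 0, eG cc ss]!j))"
    unfolding two ev_def by simp
  ultimately show ?thesis unfolding wcone_def by blast
qed

lemma edge:
  assumes ball: "x*x + y*y + z*z \<le> 1" and X0: "x + z - 1 > 0" and cond: "(2 + s3) * \<bar>y\<bar> \<le> x + z - 1"
  shows "realizable x y z"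
proof -
  define Xe where "Xe = x + z - 1"
  define N where "N = sqrt (Xe*Xe + y*y)"
  have Xe0: "Xe > 0" using X0 Xe_def by simp
  have Np: "N > 0" unfolding N_def using Xe0 by (simp add: add_pos_nonneg)
  have NN: "N * N = Xe*Xe + y*y" unfolding N_def by simp
  define cc where "cc = Xe / N"
  define ss where "ss = y / N"
  have cs: "cc * cc + ss * ss = 1"
  proof -
    have "cc * cc + ss * ss = (Xe*Xe + y*y) / (N * N)" unfolding cc_def ss_def by (simp add: add_divide_distrib)
    then show ?thesis unfolding NN[symmetric] using Np by simp
  qed
  have ay: "(2 + s3) * \<bar>y\<bar> \<le> Xe" using cond Xe_def by simp
  have key: "N \<le> sqrt 2 * (Xe - \<bar>y\<bar>)"
  proof -
    have f1: "0 \<le> Xe - (2 + s3) * \<bar>y\<bar>" using ay by simp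
    have "(2 - s3) * \<bar>y\<bar> \<le> (2 + s3) * \<bar>y\<bar>" using s3_bounds by (intro mult_right_mono) auto
    then have f2: "0 \<le> Xe - (2 - s3) * \<bar>y\<bar>" using ay by linarith
    have "0 \<le> (Xe - (2 + s3) * \<bar>y\<bar>) * (Xe - (2 - s3) * \<bar>y\<bar>)" using f1 f2 by simp
    also have "\<dots> = Xe*Xe - 4 * Xe * \<bar>y\<bar> + \<bar>y\<bar> * \<bar>y\<bar>"
      by (simp add: algebra_simps s3rr s3sq)
    finally have q: "Xe*Xe + y*y \<le> 2 * ((Xe - \<bar>y\<bar>) * (Xe - \<bar>y\<bar>))"
      by (simp add: algebra_simps abs_mult_self_eq)
    have "1 * \<bar>y\<bar> \<le> (2 + s3) * \<bar>y\<bar>" using s3_bounds by (intro mult_right_mono) auto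
    then have xy: "0 \<le> Xe - \<bar>y\<bar>" using ay by linarith
    have "N = sqrt (Xe*Xe + y*y)" by (simp add: N_def)
    also have "\<dots> \<le> sqrt (2 * ((Xe - \<bar>y\<bar>) * (Xe - \<bar>y\<bar>)))" using q by simp
    also have "\<dots> = sqrt 2 * (Xe - \<bar>y\<bar>)" using xy by (simp add: real_sqrt_mult)
    finally show ?thesis .
  qed
  have h1: "sqrt 2 * (cc - ss) \<ge> 1" and h2: "sqrt 2 * (cc + ss) \<ge> 1"
  proof -
    have "sqrt 2 * (Xe - \<bar>y\<bar>) / N \<ge> 1" using key Np by simp
    then have a: "sqrt 2 * (cc - \<bar>ss\<bar>) \<ge> 1" unfolding cc_def ss_def using Np by (simp add: field_simps)
    have "sqrt 2 * (cc - \<bar>ss\<bar>) \<le> sqrt 2 * (cc - ss)" "sqrt 2 * (cc - \<bar>ss\<bar>) \<le> sqrt 2 * (cc + ss)"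
      by (auto intro!: mult_left_mono)
    then show "sqrt 2 * (cc - ss) \<ge> 1" "sqrt 2 * (cc + ss) \<ge> 1" using a by linarith+
  qed
  have z1: "z < 1"
  proof (rule ccontr)
    assume "\<not> z < 1"
    then have z1: "z \<ge> 1" by simp
    then have zz: "z * 1 \<le> z * z" by (intro mult_left_mono) auto
    have "1 * 1 \<le> z * z" using z1 by (intro mult_mono) auto
    then have "x*x + y*y \<le> 0" using ball by simp
    moreover have "0 \<le> x*x" "0 \<le> y*y" by simp_all
    ultimately have "x*x = 0" by linarith
    then have "x = 0" by simp
    moreover have "z*z \<le> 1" using ball \<open>0 \<le> x*x\<close> \<open>0 \<le> y*y\<close> by linarith
    then have "z \<le> 1" using zz by simp
    ultimately show False using X0 by simp
  qed
  define p where "p = 1 - x"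
  define sz where "sz = 1 - z"
  define q where "q = N / sqrt 2"
  have szp: "sz > 0" unfolding sz_def using z1 by simp
  have pq: "p * sz - q * q = (1 - x*x - y*y - z*z) / 2"
    unfolding p_def sz_def q_def using NN unfolding Xe_def by (simp add: field_simps)
  have pq0: "q * q / sz \<le> p"
  proof -
    have "q * q \<le> p * sz" using pq ball by simp
    then show ?thesis using szp by (simp add: field_simps)
  qed
  define al where "al = q / sqrt sz"
  define be where "be = sqrt sz"
  define ga where "ga = sqrt (p - q * q / sz)"
  have q0: "q \<ge> 0" unfolding q_def using Np by simp
  have ab: "al * be = q" unfolding al_def be_def using szp by simp
  have aa: "al * al = q * q / sz" unfolding al_def using szp by (simp add: field_simps)
  have bb: "be * be = sz" unfolding be_def using szp by simp
  have gg: "ga * ga = p - q * q / sz" unfolding ga_def using pq0 by simp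
  have r2q: "sqrt 2 * (al * be) * cc = Xe" "sqrt 2 * (al * be) * ss = y"
    unfolding ab q_def cc_def ss_def using Np by simp_all
  define v where "v = (\<lambda>i::nat. [ev cc ss al be, ev cc ss ga 0] ! i)"
  have two: "{..<2::nat} = {0,1}" by auto
  have vc: "\<forall>i<2. v i \<in> wcone (eW cc ss)"
  proof -
    have "ev cc ss al be \<in> wcone (eW cc ss)" "ev cc ss ga 0 \<in> wcone (eW cc ss)"
      using q0 szp pq0 by (auto intro!: ev_cone[OF cs] simp: al_def be_def ga_def)
    then show ?thesis unfolding v_def by (auto simp: less_Suc_eq numeral_2_eq_2)
  qed
  have r2q': "sqrt 2 * al * be * cc = Xe" "sqrt 2 * al * be * ss = y"
    using r2q by (simp_all add: mult.assoc)
  have sT: "(\<Sum>i<2. bT (v i)) = 1"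
    unfolding two v_def using ev_bloch[OF cs] r2q' aa bb gg
    by (simp add: p_def sz_def Xe_def)
  have sX: "(\<Sum>i<2. bX (v i)) = x"
    unfolding two v_def using ev_bloch[OF cs] r2q' aa bb gg
    by (simp add: p_def sz_def Xe_def)
  have sY: "(\<Sum>i<2. bY (v i)) = y"
    unfolding two v_def using ev_bloch[OF cs] r2q' aa bb gg
    by (simp add: p_def sz_def Xe_def)
  have sZ: "(\<Sum>i<2. bZ (v i)) = z"
    unfolding two v_def using ev_bloch[OF cs] r2q' aa bb gg
    by (simp add: p_def sz_def Xe_def)
  show ?thesis unfolding realizable_def using eW_wit[OF cs h1 h2] vc sT sX sY sZ by blast
qed


lemma cmods: "cmod (1::complex) = 1" "cmod (-1::complex) = 1" "cmod \<i> = 1" "cmod (- \<i>) = 1"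
  "cmod (Complex (1 / sqrt 2) (1 / sqrt 2)) = 1" "cmod (Complex (1 / sqrt 2) (- 1 / sqrt 2)) = 1"
  by (simp_all add: cmod_def power2_eq_square)

lemma stab_cases:
  assumes "\<phi> \<in> stab_states"
  obtains "\<phi> = ket 1 0" | "\<phi> = ket 0 1" | "\<phi> = ket (1 / sqrt 2) (1 / sqrt 2)" | "\<phi> = ket (1 / sqrt 2) (- 1 / sqrt 2)" | "\<phi> = ket (1 / sqrt 2) (\<i> / sqrt 2)" | "\<phi> = ket (1 / sqrt 2) (- \<i> / sqrt 2)"
  using assms unfolding stab_states_def by blast

definition Tx :: "complex ^ 2 \<Rightarrow> complex ^ 2" where "Tx v = ket (cnj (v$1)) (- cnj (v$2))"

lemma Tx_img:
  "Tx (ket 1 0) = (1) *s ket 1 0"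
  "Tx (ket 0 1) = (-1) *s ket 0 1"
  "Tx (ket (1 / sqrt 2) (1 / sqrt 2)) = (1) *s ket (1 / sqrt 2) (- 1 / sqrt 2)"
  "Tx (ket (1 / sqrt 2) (- 1 / sqrt 2)) = (1) *s ket (1 / sqrt 2) (1 / sqrt 2)"
  "Tx (ket (1 / sqrt 2) (\<i> / sqrt 2)) = (1) *s ket (1 / sqrt 2) (\<i> / sqrt 2)"
  "Tx (ket (1 / sqrt 2) (- \<i> / sqrt 2)) = (1) *s ket (1 / sqrt 2) (- \<i> / sqrt 2)"
  unfolding vec_eq_iff forall_2 Tx_def by (simp_all add: complex_eq_iff field_simps)

lemma Tx_pre:
  "ket 1 0 = (1) *s Tx (ket 1 0)"
  "ket 0 1 = (-1) *s Tx (ket 0 1)"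
  "ket (1 / sqrt 2) (1 / sqrt 2) = (1) *s Tx (ket (1 / sqrt 2) (- 1 / sqrt 2))"
  "ket (1 / sqrt 2) (- 1 / sqrt 2) = (1) *s Tx (ket (1 / sqrt 2) (1 / sqrt 2))"
  "ket (1 / sqrt 2) (\<i> / sqrt 2) = (1) *s Tx (ket (1 / sqrt 2) (\<i> / sqrt 2))"
  "ket (1 / sqrt 2) (- \<i> / sqrt 2) = (1) *s Tx (ket (1 / sqrt 2) (- \<i> / sqrt 2))"
  unfolding vec_eq_iff forall_2 Tx_def by (simp_all add: complex_eq_iff field_simps)

lemma Tx_st1: "\<phi> \<in> stab_states \<Longrightarrow> \<exists>c \<phi>'. cmod c = 1 \<and> \<phi>' \<in> stab_states \<and> Tx \<phi> = c *s \<phi>'"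
  by (erule stab_cases) (use Tx_img stab_mem cmods in blast)+

lemma Tx_st2: "\<phi>' \<in> stab_states \<Longrightarrow> \<exists>c \<phi>. cmod c = 1 \<and> \<phi> \<in> stab_states \<and> \<phi>' = c *s Tx \<phi>"
  by (erule stab_cases) (use Tx_pre stab_mem cmods in blast)+

definition Ty :: "complex ^ 2 \<Rightarrow> complex ^ 2" where "Ty v = ket (cnj (v$1)) (cnj (v$2))"

lemma Ty_img:
  "Ty (ket 1 0) = (1) *s ket 1 0"
  "Ty (ket 0 1) = (1) *s ket 0 1"
  "Ty (ket (1 / sqrt 2) (1 / sqrt 2)) = (1) *s ket (1 / sqrt 2) (1 / sqrt 2)"
  "Ty (ket (1 / sqrt 2) (- 1 / sqrt 2)) = (1) *s ket (1 / sqrt 2) (- 1 / sqrt 2)"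
  "Ty (ket (1 / sqrt 2) (\<i> / sqrt 2)) = (1) *s ket (1 / sqrt 2) (- \<i> / sqrt 2)"
  "Ty (ket (1 / sqrt 2) (- \<i> / sqrt 2)) = (1) *s ket (1 / sqrt 2) (\<i> / sqrt 2)"
  unfolding vec_eq_iff forall_2 Ty_def by (simp_all add: complex_eq_iff field_simps)

lemma Ty_pre:
  "ket 1 0 = (1) *s Ty (ket 1 0)"
  "ket 0 1 = (1) *s Ty (ket 0 1)"
  "ket (1 / sqrt 2) (1 / sqrt 2) = (1) *s Ty (ket (1 / sqrt 2) (1 / sqrt 2))"
  "ket (1 / sqrt 2) (- 1 / sqrt 2) = (1) *s Ty (ket (1 / sqrt 2) (- 1 / sqrt 2))"
  "ket (1 / sqrt 2) (\<i> / sqrt 2) = (1) *s Ty (ket (1 / sqrt 2) (- \<i> / sqrt 2))"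
  "ket (1 / sqrt 2) (- \<i> / sqrt 2) = (1) *s Ty (ket (1 / sqrt 2) (\<i> / sqrt 2))"
  unfolding vec_eq_iff forall_2 Ty_def by (simp_all add: complex_eq_iff field_simps)

lemma Ty_st1: "\<phi> \<in> stab_states \<Longrightarrow> \<exists>c \<phi>'. cmod c = 1 \<and> \<phi>' \<in> stab_states \<and> Ty \<phi> = c *s \<phi>'"
  by (erule stab_cases) (use Ty_img stab_mem cmods in blast)+

lemma Ty_st2: "\<phi>' \<in> stab_states \<Longrightarrow> \<exists>c \<phi>. cmod c = 1 \<and> \<phi> \<in> stab_states \<and> \<phi>' = c *s Ty \<phi>"
  by (erule stab_cases) (use Ty_pre stab_mem cmods in blast)+

definition Tz :: "complex ^ 2 \<Rightarrow> complex ^ 2" where "Tz v = ket (cnj (v$2)) (cnj (v$1))"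

lemma Tz_img:
  "Tz (ket 1 0) = (1) *s ket 0 1"
  "Tz (ket 0 1) = (1) *s ket 1 0"
  "Tz (ket (1 / sqrt 2) (1 / sqrt 2)) = (1) *s ket (1 / sqrt 2) (1 / sqrt 2)"
  "Tz (ket (1 / sqrt 2) (- 1 / sqrt 2)) = (-1) *s ket (1 / sqrt 2) (- 1 / sqrt 2)"
  "Tz (ket (1 / sqrt 2) (\<i> / sqrt 2)) = (- \<i>) *s ket (1 / sqrt 2) (\<i> / sqrt 2)"
  "Tz (ket (1 / sqrt 2) (- \<i> / sqrt 2)) = (\<i>) *s ket (1 / sqrt 2) (- \<i> / sqrt 2)"
  unfolding vec_eq_iff forall_2 Tz_def by (simp_all add: complex_eq_iff field_simps)

lemma Tz_pre:
  "ket 1 0 = (1) *s Tz (ket 0 1)"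
  "ket 0 1 = (1) *s Tz (ket 1 0)"
  "ket (1 / sqrt 2) (1 / sqrt 2) = (1) *s Tz (ket (1 / sqrt 2) (1 / sqrt 2))"
  "ket (1 / sqrt 2) (- 1 / sqrt 2) = (-1) *s Tz (ket (1 / sqrt 2) (- 1 / sqrt 2))"
  "ket (1 / sqrt 2) (\<i> / sqrt 2) = (\<i>) *s Tz (ket (1 / sqrt 2) (\<i> / sqrt 2))"
  "ket (1 / sqrt 2) (- \<i> / sqrt 2) = (- \<i>) *s Tz (ket (1 / sqrt 2) (- \<i> / sqrt 2))"
  unfolding vec_eq_iff forall_2 Tz_def by (simp_all add: complex_eq_iff field_simps)

lemma Tz_st1: "\<phi> \<in> stab_states \<Longrightarrow> \<exists>c \<phi>'. cmod c = 1 \<and> \<phi>' \<in> stab_states \<and> Tz \<phi> = c *s \<phi>'"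
  by (erule stab_cases) (use Tz_img stab_mem cmods in blast)+

lemma Tz_st2: "\<phi>' \<in> stab_states \<Longrightarrow> \<exists>c \<phi>. cmod c = 1 \<and> \<phi> \<in> stab_states \<and> \<phi>' = c *s Tz \<phi>"
  by (erule stab_cases) (use Tz_pre stab_mem cmods in blast)+

definition Tc :: "complex ^ 2 \<Rightarrow> complex ^ 2" where "Tc v = ket ((v$1 - \<i> * v$2) / sqrt 2) ((v$1 + \<i> * v$2) / sqrt 2)"

lemma Tc_img:
  "Tc (ket 1 0) = (1) *s ket (1 / sqrt 2) (1 / sqrt 2)"
  "Tc (ket 0 1) = (- \<i>) *s ket (1 / sqrt 2) (- 1 / sqrt 2)"
  "Tc (ket (1 / sqrt 2) (1 / sqrt 2)) = (Complex (1 / sqrt 2) (- 1 / sqrt 2)) *s ket (1 / sqrt 2) (\<i> / sqrt 2)"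
  "Tc (ket (1 / sqrt 2) (- 1 / sqrt 2)) = (Complex (1 / sqrt 2) (1 / sqrt 2)) *s ket (1 / sqrt 2) (- \<i> / sqrt 2)"
  "Tc (ket (1 / sqrt 2) (\<i> / sqrt 2)) = (1) *s ket 1 0"
  "Tc (ket (1 / sqrt 2) (- \<i> / sqrt 2)) = (1) *s ket 0 1"
  unfolding vec_eq_iff forall_2 Tc_def by (simp_all add: complex_eq_iff field_simps)

lemma Tc_pre:
  "ket 1 0 = (1) *s Tc (ket (1 / sqrt 2) (\<i> / sqrt 2))"
  "ket 0 1 = (1) *s Tc (ket (1 / sqrt 2) (- \<i> / sqrt 2))"
  "ket (1 / sqrt 2) (1 / sqrt 2) = (1) *s Tc (ket 1 0)"
  "ket (1 / sqrt 2) (- 1 / sqrt 2) = (\<i>) *s Tc (ket 0 1)"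
  "ket (1 / sqrt 2) (\<i> / sqrt 2) = (Complex (1 / sqrt 2) (1 / sqrt 2)) *s Tc (ket (1 / sqrt 2) (1 / sqrt 2))"
  "ket (1 / sqrt 2) (- \<i> / sqrt 2) = (Complex (1 / sqrt 2) (- 1 / sqrt 2)) *s Tc (ket (1 / sqrt 2) (- 1 / sqrt 2))"
  unfolding vec_eq_iff forall_2 Tc_def by (simp_all add: complex_eq_iff field_simps)

lemma Tc_st1: "\<phi> \<in> stab_states \<Longrightarrow> \<exists>c \<phi>'. cmod c = 1 \<and> \<phi>' \<in> stab_states \<and> Tc \<phi> = c *s \<phi>'"
  by (erule stab_cases) (use Tc_img stab_mem cmods in blast)+

lemma Tc_st2: "\<phi>' \<in> stab_states \<Longrightarrow> \<exists>c \<phi>. cmod c = 1 \<and> \<phi> \<in> stab_states \<and> \<phi>' = c *s Tc \<phi>"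
  by (erule stab_cases) (use Tc_pre stab_mem cmods in blast)+


lemma transfer:
  fixes T :: "complex ^ 2 \<Rightarrow> complex ^ 2"
  assumes add: "\<And>u v. T (u + v) = T u + T v"
    and scl: "\<And>r v. T (r *\<^sub>R v) = r *\<^sub>R T v"
    and br: "\<And>w v. braket (T w) (T v) = braket w v \<or> braket (T w) (T v) = cnj (braket w v)"
    and sm: "\<And>c v. T (c *s v) = c *s T v \<or> T (c *s v) = cnj c *s T v"
    and st1: "\<And>\<phi>. \<phi> \<in> stab_states \<Longrightarrow> \<exists>c \<phi>'. cmod c = 1 \<and> \<phi>' \<in> stab_states \<and> T \<phi> = c *s \<phi>'"
    and st2: "\<And>\<phi>'. \<phi>' \<in> stab_states \<Longrightarrow> \<exists>c \<phi>. cmod c = 1 \<and> \<phi> \<in> stab_states \<and> \<phi>' = c *s T \<phi>"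
  shows transfer_wit: "omega_witness w \<Longrightarrow> omega_witness (T w)"
    and transfer_cone: "v \<in> wcone w \<Longrightarrow> T v \<in> wcone (T w)"
proof -
  have cm: "cmod (braket (T w) (T v)) = cmod (braket w v)" for w v
    using br[of w v] by auto
  show "omega_witness w \<Longrightarrow> omega_witness (T w)"
    unfolding omega_witness_def
  proof
    fix \<phi>' assume wit: "\<forall>\<phi>\<in>stab_states. cmod (braket w \<phi>) \<le> 1" and p: "\<phi>' \<in> stab_states"
    obtain c \<phi> where c: "cmod c = 1" "\<phi> \<in> stab_states" "\<phi>' = c *s T \<phi>" using st2[OF p] by blast
    have "cmod (braket (T w) \<phi>') = cmod (braket w \<phi>)" unfolding c(3) braket_smult norm_mult c(1) cm by simp
    then show "cmod (braket (T w) \<phi>') \<le> 1" using wit c(2) by simp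
  qed
  have T0: "T 0 = 0" using scl[of 0 0] by simp
  have Tsum: "T (\<Sum>j<n. f j) = (\<Sum>j<n. T (f j))" for n :: nat and f
    by (induction n) (simp_all add: T0 add)
  assume "v \<in> wcone w"
  then obtain n t g where h: "\<forall>j<(n::nat). 0 \<le> t j \<and> g j \<in> gen w" and v: "v = (\<Sum>j<n. t j *\<^sub>R g j)"
    unfolding wcone_def by blast
  have f1: "T v = (\<Sum>j<n. t j *\<^sub>R T (g j))" unfolding v Tsum scl ..
  have f2: "\<forall>j<n. 0 \<le> t j \<and> T (g j) \<in> gen (T w)"
  proof (intro allI impI conjI)
    fix j assume j: "j < n"
    then show "0 \<le> t j" using h by blast
    have g: "g j \<in> gen w" using h j by blast
    then obtain c \<phi> where c: "braket w (g j) = 1" "cmod c = 1" "\<phi> \<in> stab_states" "g j = c *s \<phi>"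
      unfolding gen_def by blast
    have b: "braket (T w) (T (g j)) = 1" using br[of w "g j"] c(1) by auto
    obtain c2 \<phi>2 where c2: "cmod c2 = 1" "\<phi>2 \<in> stab_states" "T \<phi> = c2 *s \<phi>2" using st1[OF c(3)] by blast
    obtain c3 where c3: "cmod c3 = 1" "T (g j) = c3 *s T \<phi>"
    proof (cases "T (c *s \<phi>) = c *s T \<phi>")
      case True
      then show ?thesis using that[of c] c(2) unfolding c(4) by simp
    next
      case False
      then have "T (c *s \<phi>) = cnj c *s T \<phi>" using sm[of c \<phi>] by blast
      moreover have "cmod (cnj c) = 1" using c(2) by simp
      ultimately show ?thesis using that[of "cnj c"] unfolding c(4) by simp
    qed
    have "T (g j) = (c3 * c2) *s \<phi>2" unfolding c3(2) c2(3) by (simp add: vector_smult_assoc)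
    moreover have "cmod (c3 * c2) = 1" using c2(1) c3(1) by (simp add: norm_mult)
    ultimately show "T (g j) \<in> gen (T w)" unfolding gen_def using b c2(2) by blast
  qed
  show "T v \<in> wcone (T w)" unfolding wcone_def
    apply (rule CollectI)
    apply (rule exI[where x=n])
    apply (rule exI[where x=t])
    apply (rule exI[where x="\<lambda>j. T (g j)"])
    using f1 f2 by simp
qed


lemma cs2: "complex_of_real (sqrt 2) * complex_of_real (sqrt 2) = 2" "complex_of_real (sqrt 2) * (complex_of_real (sqrt 2) * X) = 2 * X"
  by (simp_all add: of_real_mult[symmetric] mult.assoc[symmetric])

lemma Tx_add: "Tx (u + v) = Tx u + Tx v"
  unfolding vec_eq_iff forall_2 Tx_def vector_add_component ket_comp by (simp add: field_simps cs2)

lemma Tx_scl: "Tx (r *\<^sub>R v) = r *\<^sub>R Tx v"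
  unfolding vec_eq_iff forall_2 Tx_def vector_scaleR_component ket_comp by (simp add: scaleR_conv_of_real field_simps)

lemma Tx_br: "braket (Tx w) (Tx v) = braket w v \<or> braket (Tx w) (Tx v) = cnj (braket w v)"
  apply (rule disjI2)
  unfolding braket_def sum_2 Tx_def ket_comp by (simp add: field_simps cs2)

lemma Tx_sm: "Tx (c *s v) = c *s Tx v \<or> Tx (c *s v) = cnj c *s Tx v"
  apply (rule disjI2)
  unfolding vec_eq_iff forall_2 Tx_def vector_smult_component ket_comp by (simp add: field_simps cs2)

lemma Tx_bloch: "bT (Tx v) = bT v" "bX (Tx v) = - bX v" "bY (Tx v) = bY v" "bZ (Tx v) = bZ v"
  unfolding bT_def bX_def bY_def bZ_def Tx_def ket_comp by (simp_all add: cm2 power2_eq_square field_simps)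

lemmas Tx_props = Tx_add Tx_scl Tx_br Tx_sm Tx_st1 Tx_st2

lemma Ty_add: "Ty (u + v) = Ty u + Ty v"
  unfolding vec_eq_iff forall_2 Ty_def vector_add_component ket_comp by (simp add: field_simps cs2)

lemma Ty_scl: "Ty (r *\<^sub>R v) = r *\<^sub>R Ty v"
  unfolding vec_eq_iff forall_2 Ty_def vector_scaleR_component ket_comp by (simp add: scaleR_conv_of_real field_simps)

lemma Ty_br: "braket (Ty w) (Ty v) = braket w v \<or> braket (Ty w) (Ty v) = cnj (braket w v)"
  apply (rule disjI2)
  unfolding braket_def sum_2 Ty_def ket_comp by (simp add: field_simps cs2)

lemma Ty_sm: "Ty (c *s v) = c *s Ty v \<or> Ty (c *s v) = cnj c *s Ty v"
  apply (rule disjI2)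
  unfolding vec_eq_iff forall_2 Ty_def vector_smult_component ket_comp by (simp add: field_simps cs2)

lemma Ty_bloch: "bT (Ty v) = bT v" "bX (Ty v) = bX v" "bY (Ty v) = - bY v" "bZ (Ty v) = bZ v"
  unfolding bT_def bX_def bY_def bZ_def Ty_def ket_comp by (simp_all add: cm2 power2_eq_square field_simps)

lemmas Ty_props = Ty_add Ty_scl Ty_br Ty_sm Ty_st1 Ty_st2

lemma Tz_add: "Tz (u + v) = Tz u + Tz v"
  unfolding vec_eq_iff forall_2 Tz_def vector_add_component ket_comp by (simp add: field_simps cs2)

lemma Tz_scl: "Tz (r *\<^sub>R v) = r *\<^sub>R Tz v"
  unfolding vec_eq_iff forall_2 Tz_def vector_scaleR_component ket_comp by (simp add: scaleR_conv_of_real field_simps)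

lemma Tz_br: "braket (Tz w) (Tz v) = braket w v \<or> braket (Tz w) (Tz v) = cnj (braket w v)"
  apply (rule disjI2)
  unfolding braket_def sum_2 Tz_def ket_comp by (simp add: field_simps cs2)

lemma Tz_sm: "Tz (c *s v) = c *s Tz v \<or> Tz (c *s v) = cnj c *s Tz v"
  apply (rule disjI2)
  unfolding vec_eq_iff forall_2 Tz_def vector_smult_component ket_comp by (simp add: field_simps cs2)

lemma Tz_bloch: "bT (Tz v) = bT v" "bX (Tz v) = bX v" "bY (Tz v) = bY v" "bZ (Tz v) = - bZ v"
  unfolding bT_def bX_def bY_def bZ_def Tz_def ket_comp by (simp_all add: cm2 power2_eq_square field_simps)

lemmas Tz_props = Tz_add Tz_scl Tz_br Tz_sm Tz_st1 Tz_st2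

lemma Tc_add: "Tc (u + v) = Tc u + Tc v"
  unfolding vec_eq_iff forall_2 Tc_def vector_add_component ket_comp by (simp add: field_simps cs2)

lemma Tc_scl: "Tc (r *\<^sub>R v) = r *\<^sub>R Tc v"
  unfolding vec_eq_iff forall_2 Tc_def vector_scaleR_component ket_comp by (simp add: scaleR_conv_of_real field_simps)

lemma Tc_br: "braket (Tc w) (Tc v) = braket w v \<or> braket (Tc w) (Tc v) = cnj (braket w v)"
  apply (rule disjI1)
  unfolding braket_def sum_2 Tc_def ket_comp by (simp add: field_simps cs2)

lemma Tc_sm: "Tc (c *s v) = c *s Tc v \<or> Tc (c *s v) = cnj c *s Tc v"
  apply (rule disjI1)
  unfolding vec_eq_iff forall_2 Tc_def vector_smult_component ket_comp by (simp add: field_simps cs2)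

lemma Tc_bloch: "bT (Tc v) = bT v" "bX (Tc v) = bZ v" "bY (Tc v) = bX v" "bZ (Tc v) = bY v"
  unfolding bT_def bX_def bY_def bZ_def Tc_def ket_comp by (simp_all add: cm2 power2_eq_square field_simps)

lemmas Tc_props = Tc_add Tc_scl Tc_br Tc_sm Tc_st1 Tc_st2


lemma real_Tx:
  assumes "realizable x y z"
  shows "realizable (-x) y z"
proof -
  obtain w n v where wit: "omega_witness w" and vc: "\<forall>i<(n::nat). v i \<in> wcone w"
    and sT: "(\<Sum>i<n. bT (v i)) = 1" and sX: "(\<Sum>i<n. bX (v i)) = x"
    and sY: "(\<Sum>i<n. bY (v i)) = y" and sZ: "(\<Sum>i<n. bZ (v i)) = z"
    using assms unfolding realizable_def by blast
  have w2: "omega_witness (Tx w)" by (rule transfer_wit[OF Tx_props wit])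
  have v2: "\<forall>i<n. Tx (v i) \<in> wcone (Tx w)" using transfer_cone[OF Tx_props] vc by blast
  have s: "(\<Sum>i<n. bT (Tx (v i))) = 1" "(\<Sum>i<n. bX (Tx (v i))) = (-x)"
    "(\<Sum>i<n. bY (Tx (v i))) = y" "(\<Sum>i<n. bZ (Tx (v i))) = z"
    using sT sX sY sZ by (simp_all add: Tx_bloch sum_negf)
  show ?thesis unfolding realizable_def
    apply (rule exI[where x="Tx w"])
    apply (rule exI[where x=n])
    apply (rule exI[where x="\<lambda>i. Tx (v i)"])
    using w2 v2 s by simp
qed

lemma real_Ty:
  assumes "realizable x y z"
  shows "realizable x (-y) z"
proof -
  obtain w n v where wit: "omega_witness w" and vc: "\<forall>i<(n::nat). v i \<in> wcone w"
    and sT: "(\<Sum>i<n. bT (v i)) = 1" and sX: "(\<Sum>i<n. bX (v i)) = x"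
    and sY: "(\<Sum>i<n. bY (v i)) = y" and sZ: "(\<Sum>i<n. bZ (v i)) = z"
    using assms unfolding realizable_def by blast
  have w2: "omega_witness (Ty w)" by (rule transfer_wit[OF Ty_props wit])
  have v2: "\<forall>i<n. Ty (v i) \<in> wcone (Ty w)" using transfer_cone[OF Ty_props] vc by blast
  have s: "(\<Sum>i<n. bT (Ty (v i))) = 1" "(\<Sum>i<n. bX (Ty (v i))) = x"
    "(\<Sum>i<n. bY (Ty (v i))) = (-y)" "(\<Sum>i<n. bZ (Ty (v i))) = z"
    using sT sX sY sZ by (simp_all add: Ty_bloch sum_negf)
  show ?thesis unfolding realizable_def
    apply (rule exI[where x="Ty w"])
    apply (rule exI[where x=n])
    apply (rule exI[where x="\<lambda>i. Ty (v i)"])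
    using w2 v2 s by simp
qed

lemma real_Tz:
  assumes "realizable x y z"
  shows "realizable x y (-z)"
proof -
  obtain w n v where wit: "omega_witness w" and vc: "\<forall>i<(n::nat). v i \<in> wcone w"
    and sT: "(\<Sum>i<n. bT (v i)) = 1" and sX: "(\<Sum>i<n. bX (v i)) = x"
    and sY: "(\<Sum>i<n. bY (v i)) = y" and sZ: "(\<Sum>i<n. bZ (v i)) = z"
    using assms unfolding realizable_def by blast
  have w2: "omega_witness (Tz w)" by (rule transfer_wit[OF Tz_props wit])
  have v2: "\<forall>i<n. Tz (v i) \<in> wcone (Tz w)" using transfer_cone[OF Tz_props] vc by blast
  have s: "(\<Sum>i<n. bT (Tz (v i))) = 1" "(\<Sum>i<n. bX (Tz (v i))) = x"
    "(\<Sum>i<n. bY (Tz (v i))) = y" "(\<Sum>i<n. bZ (Tz (v i))) = (-z)"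
    using sT sX sY sZ by (simp_all add: Tz_bloch sum_negf)
  show ?thesis unfolding realizable_def
    apply (rule exI[where x="Tz w"])
    apply (rule exI[where x=n])
    apply (rule exI[where x="\<lambda>i. Tz (v i)"])
    using w2 v2 s by simp
qed

lemma real_Tc:
  assumes "realizable x y z"
  shows "realizable z x y"
proof -
  obtain w n v where wit: "omega_witness w" and vc: "\<forall>i<(n::nat). v i \<in> wcone w"
    and sT: "(\<Sum>i<n. bT (v i)) = 1" and sX: "(\<Sum>i<n. bX (v i)) = x"
    and sY: "(\<Sum>i<n. bY (v i)) = y" and sZ: "(\<Sum>i<n. bZ (v i)) = z"
    using assms unfolding realizable_def by blast
  have w2: "omega_witness (Tc w)" by (rule transfer_wit[OF Tc_props wit])
  have v2: "\<forall>i<n. Tc (v i) \<in> wcone (Tc w)" using transfer_cone[OF Tc_props] vc by blast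
  have s: "(\<Sum>i<n. bT (Tc (v i))) = 1" "(\<Sum>i<n. bX (Tc (v i))) = z"
    "(\<Sum>i<n. bY (Tc (v i))) = x" "(\<Sum>i<n. bZ (Tc (v i))) = y"
    using sT sX sY sZ by (simp_all add: Tc_bloch )
  show ?thesis unfolding realizable_def
    apply (rule exI[where x="Tc w"])
    apply (rule exI[where x=n])
    apply (rule exI[where x="\<lambda>i. Tc (v i)"])
    using w2 v2 s by simp
qed


lemma edge_from_F:
  assumes "0 \<le> c" "fF s3 c a b 1 < 0"
  shows "a + b - 1 > 0" "(2 + s3) * \<bar>c\<bar> \<le> a + b - 1"
proof -
  have k0: "2 - s3 > 0" using s3_bounds by simp
  have kk: "(2 + s3) * (2 - s3) = 1" using s3sq by (simp add: algebra_simps)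
  have lt: "c < (2 - s3) * (a + b - 1)" using assms(2) unfolding fF_def by simp
  then have "(2 - s3) * (a + b - 1) > 0" using assms(1) by linarith
  then show "a + b - 1 > 0" using k0 by (simp add: zero_less_mult_iff)
  have "(2 + s3) * c \<le> (2 + s3) * ((2 - s3) * (a + b - 1))"
    using lt s3_bounds by (intro mult_left_mono) auto
  also have "\<dots> = a + b - 1" by (simp add: mult.assoc[symmetric] kk)
  finally show "(2 + s3) * \<bar>c\<bar> \<le> a + b - 1" using assms(1) by simp
qed

lemma pos_case:
  assumes "0 \<le> x" "0 \<le> y" "0 \<le> z" and ball: "x*x + y*y + z*z \<le> 1" and sm: "x + y + z > 1"
  shows "realizable x y z"
proof (cases "fF s3 y x z 1 < 0")
  case True
  note e = edge_from_F[OF assms(2) True]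
  show ?thesis by (rule edge[OF ball]) (use e in simp_all)
next
  case Fy: False
  show ?thesis
  proof (cases "fF s3 z x y 1 < 0")
    case True
    note e = edge_from_F[OF assms(3) True]
    have b: "y*y + z*z + x*x \<le> 1" using ball by simp
    have "realizable y z x" by (rule edge[OF b]) (use e in \<open>simp_all add: ac_simps\<close>)
    then show ?thesis by (rule real_Tc)
  next
    case Fz: False
    show ?thesis
    proof (cases "fF s3 x y z 1 < 0")
      case True
      note e = edge_from_F[OF assms(1) True]
      have b: "z*z + x*x + y*y \<le> 1" using ball by simp
      have "realizable z x y" by (rule edge[OF b]) (use e in \<open>simp_all add: ac_simps\<close>)
      then have "realizable y z x" by (rule real_Tc)
      then show ?thesis by (rule real_Tc)
    next
      case Fx: False
      show ?thesis by (rule face[OF ball sm]) (use Fx Fy Fz in simp_all)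
    qed
  qed
qed

lemma general_case:
  assumes ball: "x*x + y*y + z*z \<le> 1" and ns: "\<bar>x\<bar> + \<bar>y\<bar> + \<bar>z\<bar> > 1"
  shows "realizable x y z"
proof -
  have "realizable \<bar>x\<bar> \<bar>y\<bar> \<bar>z\<bar>"
    using ball ns by (intro pos_case) (simp_all add: abs_mult_self_eq)
  then have r1: "realizable x \<bar>y\<bar> \<bar>z\<bar>"
    by (cases "x \<ge> 0") (auto dest: real_Tx)
  then have r2: "realizable x y \<bar>z\<bar>"
    by (cases "y \<ge> 0") (auto dest: real_Ty)
  then show ?thesis
    by (cases "z \<ge> 0") (auto dest: real_Tz)
qed


theorem lemma4:
  fixes \<rho> :: "complex ^ 2 ^ 2"
  assumes "density_matrix \<rho>" and "non_stabilizer \<rho>"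
  shows "\<exists>w. omega_witness w \<and> \<rho> \<in> B_omega w"
proof -
  define x where "x = 2 * Re (\<rho>$2$1)"
  define y where "y = 2 * Im (\<rho>$2$1)"
  define z where "z = Re (\<rho>$1$1) - Re (\<rho>$2$2)"
  have r: "\<rho> = mkH 1 x y z" unfolding x_def y_def z_def by (rule dm_mkH[OF assms(1)])
  have b: "x\<^sup>2 + y\<^sup>2 + z\<^sup>2 \<le> 1" unfolding x_def y_def z_def by (rule dm_ball[OF assms(1)])
  then have ball: "x*x + y*y + z*z \<le> 1" by (simp add: power2_eq_square)
  have ns: "\<bar>x\<bar> + \<bar>y\<bar> + \<bar>z\<bar> > 1"
  proof (rule ccontr)
    assume "\<not> \<bar>x\<bar> + \<bar>y\<bar> + \<bar>z\<bar> > 1"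
    then have "mkH 1 x y z \<in> convex hull (proj ` stab_states)" by (intro stab_hull) simp
    then show False using assms(2) r unfolding non_stabilizer_def by simp
  qed
  have "realizable x y z" by (rule general_case[OF ball ns])
  then show ?thesis using lemmaA[OF assms(1)] unfolding x_def y_def z_def by blast
qed

end
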